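(* Let $X$ be a proper, geodesically complete, $\delta$-hyperbolic Busemann space, vertically convergent with respect to $\infty_X$, with height function $h_X$ based at $\infty_X$, and let $d'_X$ be defined from an admissible monotone norm $N$. There is a constant $C$ depending only on $\delta$ such that for any points $p,q\in X$, any $d'_X$-geodesic $\gamma'$ from $p$ to $q$ and any $d_X$-geodesic $\gamma$ from $p$ to $q$, the total variations of $h_X$ satisfy $V_{\gamma'}(h_X)\ge V_\gamma(h_X)-C$.
   Context: $V_c(h_X)$ is the total variation of $h_X$ along a path $c$. $d'_X$ is the length metric on $X$ with path length $\sup_{0=t_0<\dots<t_n=1}\sum_iN(d_X(\gamma(t_i),\gamma(t_{i+1})),|h_X(\gamma(t_i))-h_X(\gamma(t_{i+1}))|)$, where $N$ is a norm on $\mathbb{R}^2$ with $N(1,1)=1$, $N(a,b)\ge(|a|+|b|)/2$, non-decreasing in each coordinate on $[0,\infty)^2$. *)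

theory Defs
  imports "HOL-Analysis.Analysis"
begin

text \<open>Metric spaces are given explicitly as a carrier M with a distance d
  (Metric_space M d), so that constants can be required to be uniform over all spaces.\<close>

definition proper_mspace :: "'a set \<Rightarrow> ('a \<Rightarrow> 'a \<Rightarrow> real) \<Rightarrow> bool" where
  "proper_mspace M d \<longleftrightarrow>
     (\<forall>x\<in>M. \<forall>r. compactin (Metric_space.mtopology M d) (Metric_space.mcball M d x r))"

definition geodesic_seg :: "'a set \<Rightarrow> ('a \<Rightarrow> 'a \<Rightarrow> real) \<Rightarrow> (real \<Rightarrow> 'a) \<Rightarrow> real \<Rightarrow> real \<Rightarrow> bool" where
  "geodesic_seg M d c a b \<longleftrightarrow> a \<le> b \<and> c ` {a..b} \<subseteq> M \<and>
     (\<forall>s\<in>{a..b}. \<forall>t\<in>{a..b}. d (c s) (c t) = \<bar>s - t\<bar>)"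

definition geodesic_from_to ::
  "'a set \<Rightarrow> ('a \<Rightarrow> 'a \<Rightarrow> real) \<Rightarrow> (real \<Rightarrow> 'a) \<Rightarrow> 'a \<Rightarrow> 'a \<Rightarrow> bool" where
  "geodesic_from_to M d c p q \<longleftrightarrow> geodesic_seg M d c 0 (d p q) \<and> c 0 = p \<and> c (d p q) = q"

definition geodesic_ray :: "'a set \<Rightarrow> ('a \<Rightarrow> 'a \<Rightarrow> real) \<Rightarrow> (real \<Rightarrow> 'a) \<Rightarrow> bool" where
  "geodesic_ray M d c \<longleftrightarrow> c ` {0..} \<subseteq> M \<and>
     (\<forall>s\<ge>0. \<forall>t\<ge>0. d (c s) (c t) = \<bar>s - t\<bar>)"

definition geodesic_line :: "'a set \<Rightarrow> ('a \<Rightarrow> 'a \<Rightarrow> real) \<Rightarrow> (real \<Rightarrow> 'a) \<Rightarrow> bool" where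
  "geodesic_line M d c \<longleftrightarrow> range c \<subseteq> M \<and> (\<forall>s t. d (c s) (c t) = \<bar>s - t\<bar>)"

definition geodesic_mspace :: "'a set \<Rightarrow> ('a \<Rightarrow> 'a \<Rightarrow> real) \<Rightarrow> bool" where
  "geodesic_mspace M d \<longleftrightarrow> (\<forall>x\<in>M. \<forall>y\<in>M. \<exists>c. geodesic_from_to M d c x y)"

definition geodesically_complete :: "'a set \<Rightarrow> ('a \<Rightarrow> 'a \<Rightarrow> real) \<Rightarrow> bool" where
  "geodesically_complete M d \<longleftrightarrow>
     (\<forall>c a b. a < b \<and> geodesic_seg M d c a b \<longrightarrow>
        (\<exists>g. geodesic_line M d g \<and> (\<forall>t\<in>{a..b}. g t = c t)))"

definition busemann_space :: "'a set \<Rightarrow> ('a \<Rightarrow> 'a \<Rightarrow> real) \<Rightarrow> bool" where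
  "busemann_space M d \<longleftrightarrow> geodesic_mspace M d \<and>
     (\<forall>c1 c2 L1 L2. geodesic_seg M d c1 0 L1 \<and> geodesic_seg M d c2 0 L2 \<longrightarrow>
        convex_on {0..1} (\<lambda>t. d (c1 (t * L1)) (c2 (t * L2))))"

definition gromov_product :: "('a \<Rightarrow> 'a \<Rightarrow> real) \<Rightarrow> 'a \<Rightarrow> 'a \<Rightarrow> 'a \<Rightarrow> real" where
  "gromov_product d w x y = (d x w + d y w - d x y) / 2"

definition delta_hyperbolic :: "'a set \<Rightarrow> ('a \<Rightarrow> 'a \<Rightarrow> real) \<Rightarrow> real \<Rightarrow> bool" where
  "delta_hyperbolic M d \<delta> \<longleftrightarrow> (\<forall>w\<in>M. \<forall>x\<in>M. \<forall>y\<in>M. \<forall>z\<in>M.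
     gromov_product d w x z \<ge> min (gromov_product d w x y) (gromov_product d w y z) - \<delta>)"

text \<open>The boundary point \<infinity>_X is represented by a geodesic ray \<rho> converging to it;
  geodesic rays converge to the same boundary point iff they stay at bounded distance.\<close>
definition asymptotic_rays :: "('a \<Rightarrow> 'a \<Rightarrow> real) \<Rightarrow> (real \<Rightarrow> 'a) \<Rightarrow> (real \<Rightarrow> 'a) \<Rightarrow> bool" where
  "asymptotic_rays d c1 c2 \<longleftrightarrow> (\<exists>B. \<forall>t\<ge>0. d (c1 t) (c2 t) \<le> B)"

definition vertically_convergent :: "'a set \<Rightarrow> ('a \<Rightarrow> 'a \<Rightarrow> real) \<Rightarrow> (real \<Rightarrow> 'a) \<Rightarrow> bool" where
  "vertically_convergent M d \<rho> \<longleftrightarrow>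
     (\<forall>c1 c2. geodesic_ray M d c1 \<and> geodesic_ray M d c2 \<and>
        asymptotic_rays d c1 \<rho> \<and> asymptotic_rays d c2 \<rho> \<longrightarrow>
        (\<exists>t0. ((\<lambda>t. d (c1 t) (c2 (t + t0))) \<longlongrightarrow> 0) at_top))"

text \<open>Height function based at the boundary point of \<rho> (a Busemann function, with
  the sign chosen so that height increases towards \<infinity>_X).\<close>
definition height_fun :: "('a \<Rightarrow> 'a \<Rightarrow> real) \<Rightarrow> (real \<Rightarrow> 'a) \<Rightarrow> 'a \<Rightarrow> real" where
  "height_fun d \<rho> x = Lim at_top (\<lambda>t. t - d x (\<rho> t))"

definition admissible_norm :: "(real \<Rightarrow> real \<Rightarrow> real) \<Rightarrow> bool" where
  "admissible_norm N \<longleftrightarrow>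
     (\<forall>a b. N a b \<ge> 0) \<and> (\<forall>a b. N a b = 0 \<longleftrightarrow> a = 0 \<and> b = 0) \<and>
     (\<forall>c a b. N (c * a) (c * b) = \<bar>c\<bar> * N a b) \<and>
     (\<forall>a b a' b'. N (a + a') (b + b') \<le> N a b + N a' b') \<and>
     N 1 1 = 1 \<and> (\<forall>a b. N a b \<ge> (\<bar>a\<bar> + \<bar>b\<bar>) / 2) \<and>
     (\<forall>a b a' b'. 0 \<le> a \<and> a \<le> a' \<and> 0 \<le> b \<and> b \<le> b' \<longrightarrow> N a b \<le> N a' b')"

definition partition_of :: "real \<Rightarrow> real \<Rightarrow> nat \<Rightarrow> (nat \<Rightarrow> real) \<Rightarrow> bool" where
  "partition_of a b n t \<longleftrightarrow> t 0 = a \<and> t n = b \<and> (\<forall>i<n. t i < t (Suc i))"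

definition total_variation :: "(real \<Rightarrow> real) \<Rightarrow> real \<Rightarrow> real \<Rightarrow> ereal" where
  "total_variation f a b =
     (SUP nt \<in> {(n, t). partition_of a b n t}.
        ereal (\<Sum>i<fst nt. \<bar>f (snd nt (Suc i)) - f (snd nt i)\<bar>))"

definition N_length :: "('a \<Rightarrow> 'a \<Rightarrow> real) \<Rightarrow> ('a \<Rightarrow> real) \<Rightarrow> (real \<Rightarrow> real \<Rightarrow> real)
    \<Rightarrow> (real \<Rightarrow> 'a) \<Rightarrow> ereal" where
  "N_length d h N c =
     (SUP nt \<in> {(n, t). partition_of 0 1 n t}.
        ereal (\<Sum>i<fst nt. N (d (c (snd nt i)) (c (snd nt (Suc i))))
                             \<bar>h (c (snd nt i)) - h (c (snd nt (Suc i)))\<bar>))"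

definition d_prime :: "'a set \<Rightarrow> ('a \<Rightarrow> 'a \<Rightarrow> real) \<Rightarrow> ('a \<Rightarrow> real) \<Rightarrow> (real \<Rightarrow> real \<Rightarrow> real)
    \<Rightarrow> 'a \<Rightarrow> 'a \<Rightarrow> real" where
  "d_prime M d h N x y = real_of_ereal
     (INF c \<in> {c. continuous_map (top_of_set {0..1}) (Metric_space.mtopology M d) c
                 \<and> c 0 = x \<and> c 1 = y}. N_length d h N c)"

end

theory Submission
  imports Defs
begin


lemma sum_split_add: "(\<Sum>i<a+b. f i) = (\<Sum>i<a. f i) + (\<Sum>i<b. f (a+i))" for f :: "nat \<Rightarrow> real"
  by (induction b) (auto simp: add.assoc)

lemma E_ultra:
  fixes T :: "'a \<Rightarrow> 'a \<Rightarrow> real"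
  assumes "\<delta>1 > 0" and "T a c \<le> max (T a b) (T b c) + \<delta>1"
  shows "2 powr (T a c / (2*\<delta>1)) \<le> sqrt 2 * max (2 powr (T a b / (2*\<delta>1))) (2 powr (T b c / (2*\<delta>1)))"
proof -
  have "2 powr (T a c / (2*\<delta>1)) \<le> 2 powr ((max (T a b) (T b c) + \<delta>1) / (2*\<delta>1))"
    using assms by (intro powr_mono) (auto simp: divide_right_mono)
  also have "(max (T a b) (T b c) + \<delta>1) / (2*\<delta>1) = max (T a b) (T b c) / (2*\<delta>1) + 1/2"
    using assms by (simp add: field_simps)
  also have "2 powr (max (T a b) (T b c) / (2*\<delta>1) + 1/2) = 2 powr (max (T a b) (T b c) / (2*\<delta>1)) * sqrt 2"
    by (simp add: powr_add powr_half_sqrt)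
  also have "2 powr (max (T a b) (T b c) / (2*\<delta>1)) = max (2 powr (T a b / (2*\<delta>1))) (2 powr (T b c / (2*\<delta>1)))"
  proof (cases "T a b \<le> T b c")
    case True
    then show ?thesis using assms by (simp add: max_def divide_right_mono)
  next
    case False
    hence "T b c / (2*\<delta>1) \<le> T a b / (2*\<delta>1)" using assms by (simp add: divide_right_mono)
    then show ?thesis using False by (simp add: max_def)
  qed
  finally show ?thesis by (simp add: mult.commute)
qed

lemma chain_lemma:
  fixes T :: "'a \<Rightarrow> 'a \<Rightarrow> real"
  assumes d1: "\<delta>1 > 0"
    and ultra: "\<And>a b c. a \<in> S \<Longrightarrow> b \<in> S \<Longrightarrow> c \<in> S \<Longrightarrow> T a c \<le> max (T a b) (T b c) + \<delta>1"
  shows "\<forall>x. (\<forall>i\<le>n. x i \<in> S) \<longrightarrow> 1 \<le> n \<longrightarrow>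
     2 powr (T (x 0) (x n) / (2*\<delta>1)) \<le> 2 * (\<Sum>i<n. 2 powr (T (x i) (x (Suc i)) / (2*\<delta>1)))"
proof (induction n rule: less_induct)
  case (less n)
  define E where "E = (\<lambda>y::real. 2 powr (y / (2*\<delta>1)))"
  have Epos: "E y > 0" for y unfolding E_def by simp
  have EU: "E (T a c) \<le> sqrt 2 * max (E (T a b)) (E (T b c))" if "a \<in> S" "b \<in> S" "c \<in> S" for a b c
    unfolding E_def using E_ultra[OF d1 ultra[OF that]] .
  show ?case
  proof (intro allI impI)
    fix x :: "nat \<Rightarrow> 'a"
    assume xS: "\<forall>i\<le>n. x i \<in> S" and n1: "1 \<le> n"
    define e where "e = (\<lambda>i. E (T (x i) (x (Suc i))))"
    define P where "P = (\<lambda>m. \<Sum>i<m. e i)"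
    define Sm where "Sm = P n"
    have epos: "e i > 0" for i unfolding e_def using Epos by simp
    have Pmono: "P a \<le> P b" if "a \<le> b" for a b
      unfolding P_def using that epos by (intro sum_mono2) (auto intro: less_imp_le)
    show "2 powr (T (x 0) (x n) / (2*\<delta>1)) \<le> 2 * (\<Sum>i<n. 2 powr (T (x i) (x (Suc i)) / (2*\<delta>1)))"
    proof -
      have "E (T (x 0) (x n)) \<le> 2 * Sm"
      proof (cases "n = 1")
        case True
        then show ?thesis unfolding Sm_def P_def e_def using Epos[of "T (x 0) (x 1)"] by simp
      next
        case False
        hence n2: "n \<ge> 2" using n1 by simp
        define A where "A = {m. m < n \<and> P m \<le> Sm / 2}"
        have finA: "finite A" unfolding A_def by simp
        have "Sm \<ge> 0" unfolding Sm_def P_def using epos by (simp add: sum_nonneg less_imp_le)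
        hence A0: "0 \<in> A" unfolding A_def P_def using n1 by auto
        define m where "m = Max A"
        have mA: "m \<in> A" unfolding m_def using finA A0 by (intro Max_in) auto
        hence mn: "m < n" and Pm: "P m \<le> Sm / 2" unfolding A_def by auto
        have Pm1: "P (Suc m) > Sm / 2" if "Suc m < n"
        proof (rule ccontr)
          assume "\<not> ?thesis"
          hence "Suc m \<in> A" unfolding A_def using that by auto
          hence "Suc m \<le> m" unfolding m_def using finA by (intro Max_ge) auto
          thus False by simp
        qed
        have em: "e m \<le> Sm" unfolding Sm_def P_def using mn epos
          by (intro member_le_sum) (auto intro: less_imp_le)
        have left: "E (T (x 0) (x m)) \<le> Sm" if "1 \<le> m"
        proof -
          have "E (T (x 0) (x m)) \<le> 2 * P m"
            using less.IH[OF mn] xS mn that unfolding E_def P_def e_def by auto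
          thus ?thesis using Pm by simp
        qed
        have right: "E (T (x (Suc m)) (x n)) \<le> Sm" if "Suc m < n"
        proof -
          define k where "k = n - Suc m"
          define y where "y = (\<lambda>i. x (Suc m + i))"
          have k1: "1 \<le> k" "k < n" using that unfolding k_def by auto
          have nk: "n = Suc m + k" using that unfolding k_def by simp
          have "E (T (y 0) (y k)) \<le> 2 * (\<Sum>i<k. E (T (y i) (y (Suc i))))"
          proof -
            have "\<forall>i\<le>k. y i \<in> S" using xS nk unfolding y_def by auto
            thus ?thesis using less.IH[OF k1(2), rule_format, of y] k1 unfolding E_def by auto
          qed
          moreover have "y 0 = x (Suc m)" "y k = x n" unfolding y_def using nk by auto
          moreover have "Sm = P (Suc m) + (\<Sum>i<k. E (T (y i) (y (Suc i))))"
          proof -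
            have "Sm = (\<Sum>i<Suc m + k. e i)" unfolding Sm_def P_def using nk by simp
            also have "\<dots> = P (Suc m) + (\<Sum>i<k. e (Suc m + i))" unfolding P_def by (rule sum_split_add)
            also have "(\<Sum>i<k. e (Suc m + i)) = (\<Sum>i<k. E (T (y i) (y (Suc i))))"
              unfolding e_def y_def by (intro sum.cong) auto
            finally show ?thesis .
          qed
          ultimately show ?thesis using Pm1[OF that] by simp
        qed
        have s2: "sqrt 2 \<ge> 1" by simp
        have Sm0: "Sm \<ge> 0" using em epos[of m] by simp
        have xin: "x i \<in> S" if "i \<le> n" for i using xS that by simp
        show ?thesis
        proof (cases "m = 0")
          case True
          hence m1: "Suc m < n" using n2 by simp
          have "E (T (x 0) (x n)) \<le> sqrt 2 * max (E (T (x 0) (x 1))) (E (T (x 1) (x n)))"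
            using EU xin n2 by simp
          also have "\<dots> \<le> sqrt 2 * Sm"
            using em right[OF m1] True unfolding e_def by (intro mult_left_mono) auto
          also have "\<dots> \<le> 2 * Sm" using Sm0 by (intro mult_right_mono) (auto simp: real_sqrt_le_iff[of 2 4, simplified])
          finally show ?thesis .
        next
          case False
          hence m1: "1 \<le> m" by simp
          show ?thesis
          proof (cases "Suc m < n")
            case True
            have B: "E (T (x m) (x n)) \<le> sqrt 2 * Sm"
            proof -
              have "E (T (x m) (x n)) \<le> sqrt 2 * max (E (T (x m) (x (Suc m)))) (E (T (x (Suc m)) (x n)))"
                using EU xin mn True by simp
              also have "\<dots> \<le> sqrt 2 * Sm"
                using em right[OF True] unfolding e_def by (intro mult_left_mono) auto
              finally show ?thesis .
            qed
            have ss: "Sm \<le> sqrt 2 * Sm" using Sm0 s2 by (simp add: mult_le_cancel_right1)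
            have mx: "max (E (T (x 0) (x m))) (E (T (x m) (x n))) \<le> sqrt 2 * Sm"
              using B left[OF m1] ss by simp
            have "E (T (x 0) (x n)) \<le> sqrt 2 * max (E (T (x 0) (x m))) (E (T (x m) (x n)))"
              using EU xin mn by simp
            also have "\<dots> \<le> sqrt 2 * (sqrt 2 * Sm)" using mx by (intro mult_left_mono) auto
            also have "\<dots> = 2 * Sm" by (simp add: mult.assoc[symmetric])
            finally show ?thesis .
          next
            case False
            hence mn': "Suc m = n" using mn by simp
            have "E (T (x 0) (x n)) \<le> sqrt 2 * max (E (T (x 0) (x m))) (E (T (x m) (x n)))"
              using EU xin mn by simp
            also have "\<dots> \<le> sqrt 2 * Sm"
              using em left[OF m1] mn' unfolding e_def by (intro mult_left_mono) auto
            also have "\<dots> \<le> 2 * Sm" using Sm0 by (intro mult_right_mono) (auto simp: real_sqrt_le_iff[of 2 4, simplified])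
            finally show ?thesis .
          qed
        qed
      qed
      thus ?thesis unfolding E_def Sm_def P_def e_def by simp
    qed
  qed
qed



lemma left_tail:
  fixes a :: real
  shows "(\<Sum>i<n. if real i < a then 2 powr (real i - a) else 0) \<le> min (2 powr (real n - a)) 2"
proof (induction n)
  case 0
  then show ?case by simp
next
  case (Suc n)
  show ?case
  proof (cases "real n < a")
    case True
    have "2 powr (real n - a) < 2 powr 0" using True by (intro powr_less_mono) auto
    hence lt: "2 powr (real n - a) < 1" by simp
    have eq: "2 powr (real (Suc n) - a) = 2 * 2 powr (real n - a)"
    proof -
      have "2 powr (real (Suc n) - a) = 2 powr ((real n - a) + 1)"
        by (rule arg_cong[where f="\<lambda>x. 2 powr x"]) simp
      also have "\<dots> = 2 powr (real n - a) * 2 powr 1" by (rule powr_add)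
      finally show ?thesis by simp
    qed
    show ?thesis using Suc True lt eq by auto
  next
    case False
    have "2 powr (real n - a) \<le> 2 powr (real (Suc n) - a)" by (intro powr_mono) auto
    moreover have "(\<Sum>i<Suc n. if real i < a then 2 powr (real i - a) else 0) = (\<Sum>i<n. if real i < a then 2 powr (real i - a) else 0)"
      using False by simp
    ultimately show ?thesis using Suc unfolding min.bounded_iff by linarith
  qed
qed

lemma right_tail:
  fixes b :: real
  shows "(\<Sum>i<n. if b < real i then 2 powr (b - real i) else 0) \<le> 2 - min 2 (2 powr (b - real n + 1))"
proof (induction n)
  case 0
  have "2 powr (b + 1) > 0" by simp
  then show ?case by simp
next
  case (Suc n)
  show ?case
  proof (cases "b < real n")
    case True
    have "2 powr (b - real n) < 2 powr 0" using True by (intro powr_less_mono) auto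
    hence lt: "2 powr (b - real n) < 1" by simp
    have eq: "2 powr (b - real n + 1) = 2 * 2 powr (b - real n)"
      by (simp add: powr_add)
    have eq2: "b - real (Suc n) + 1 = b - real n" by simp
    show ?thesis using Suc True lt eq eq2 by auto
  next
    case False
    have "2 powr 1 \<le> 2 powr (b - real n + 1)" using False by (intro powr_mono) auto
    hence "min 2 (2 powr (b - real n + 1)) = 2" by simp
    moreover have "2 - min 2 (2 powr (b - real (Suc n) + 1)) \<ge> 0" by simp
    ultimately show ?thesis using Suc False by auto
  qed
qed

lemma mid_count:
  fixes a b :: real
  shows "(\<Sum>i<n. if a \<le> real i \<and> real i \<le> b then 1 else 0) \<le> max 0 (min (real n) (b + 1) - a)"
proof (induction n)
  case 0
  then show ?case by simp
next
  case (Suc n)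
  then show ?case by (auto simp: max_def min_def split: if_splits)
qed

lemma pow2_nat_bound: "m \<ge> 7 \<Longrightarrow> (2::real) ^ m \<ge> 8 * real m + 28"
proof (induction m rule: dec_induct)
  case base
  then show ?case by simp
next
  case (step m)
  then show ?case by simp
qed

lemma exp_bound:
  fixes k :: real
  assumes "k \<ge> 0" "2 powr k \<le> 8 * k + 20"
  shows "k < 7"
proof (rule ccontr)
  assume "\<not> k < 7"
  hence k7: "k \<ge> 7" by simp
  define m where "m = nat \<lfloor>k\<rfloor>"
  have m7: "m \<ge> 7" unfolding m_def using k7 by linarith
  have mk: "real m \<le> k" "k < real m + 1" unfolding m_def using k7 by linarith+
  have "2 powr (real m) \<le> 2 powr k" using mk by (intro powr_mono) auto
  moreover have "2 powr (real m) = 2 ^ m" by (simp add: powr_realpow)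
  ultimately have "8 * real m + 28 \<le> 2 powr k" using pow2_nat_bound[OF m7] by simp
  thus False using assms mk by linarith
qed



lemma key_discrete:
  fixes T :: "'a \<Rightarrow> 'a \<Rightarrow> real" and x :: "nat \<Rightarrow> 'a" and u :: "nat \<Rightarrow> real"
  assumes d1: "\<delta>1 > 0"
    and ultra: "\<And>a b c. a \<in> S \<Longrightarrow> b \<in> S \<Longrightarrow> c \<in> S \<Longrightarrow> T a c \<le> max (T a b) (T b c) + \<delta>1"
    and xS: "\<forall>i\<le>n. x i \<in> S" and n1: "1 \<le> n"
    and Ti: "\<forall>i<n. T (x i) (x (Suc i)) \<le> u i + 2*\<delta>1"
    and lip0: "\<forall>i<n. u i - u 0 \<le> real i * (2*\<delta>1)"
    and lipn: "\<forall>i<n. u i - u n \<le> D - real i * (2*\<delta>1)"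
    and Dle: "D \<le> 2 * T (x 0) (x n) - u 0 - u n"
    and Hi: "\<forall>i<n. u i \<le> H" and H0: "u 0 \<le> H"
  shows "T (x 0) (x n) - H < 14 * \<delta>1"
proof (rule ccontr)
  assume "\<not> ?thesis"
  hence Kbig: "T (x 0) (x n) - H \<ge> 14 * \<delta>1" by simp
  define \<beta> where "\<beta> = 2 * \<delta>1"
  have b0: "\<beta> > 0" unfolding \<beta>_def using d1 by simp
  define K where "K = T (x 0) (x n) - H"
  have K0: "K \<ge> 0" unfolding K_def using Kbig d1 by simp
  define a where "a = (H - u 0) / \<beta>"
  define b where "b = a + 2 * K / \<beta>"
  have a0: "a \<ge> 0" unfolding a_def using H0 b0 by simp
  have ab: "a \<le> b" unfolding b_def using K0 b0 by simp
  define g where "g = (\<lambda>i::nat. (if real i < a then 2 powr (real i - a) else 0)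
      + (if a \<le> real i \<and> real i \<le> b then 1 else 0) + (if b < real i then 2 powr (b - real i) else 0))"
  have chain: "2 powr (T (x 0) (x n) / \<beta>) \<le> 2 * (\<Sum>i<n. 2 powr (T (x i) (x (Suc i)) / \<beta>))"
    using mp[OF mp[OF spec[OF chain_lemma[of \<delta>1 S T n, OF d1 ultra], where x=x] xS] n1] unfolding \<beta>_def .
  have step: "2 powr (T (x i) (x (Suc i)) / \<beta>) \<le> 2 * 2 powr (H / \<beta>) * g i" if "i < n" for i
  proof -
    have "2 powr (T (x i) (x (Suc i)) / \<beta>) \<le> 2 powr ((u i + \<beta>) / \<beta>)"
      using Ti that b0 unfolding \<beta>_def by (intro powr_mono divide_right_mono) auto
    also have "(u i + \<beta>) / \<beta> = 1 + H / \<beta> + (u i - H) / \<beta>" using b0 by (simp add: field_simps)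
    also have "2 powr (1 + H / \<beta> + (u i - H) / \<beta>) = 2 powr 1 * 2 powr (H / \<beta>) * 2 powr ((u i - H) / \<beta>)"
      by (simp only: powr_add)
    also have "\<dots> = 2 * 2 powr (H / \<beta>) * 2 powr ((u i - H) / \<beta>)" by simp
    also have "2 powr ((u i - H) / \<beta>) \<le> g i"
    proof -
      have e1: "(u i - H) / \<beta> \<le> real i - a"
        using lip0 that b0 unfolding a_def \<beta>_def by (simp add: field_simps)
      have e2: "(u i - H) / \<beta> \<le> b - real i"
      proof -
        have "u i - u n \<le> D - real i * (2*\<delta>1)" using lipn that by blast
        hence "u i \<le> 2 * T (x 0) (x n) - u 0 - real i * \<beta>" using Dle unfolding \<beta>_def by linarith
        hence "u i - H \<le> (H - u 0 + 2 * K) - real i * \<beta>" unfolding K_def by simp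
        hence "(u i - H) / \<beta> \<le> ((H - u 0 + 2 * K) - real i * \<beta>) / \<beta>"
          using b0 by (intro divide_right_mono) auto
        moreover have "((H - u 0 + 2 * K) - real i * \<beta>) / \<beta> = b - real i"
          unfolding b_def a_def using b0 by (simp add: diff_divide_distrib add_divide_distrib)
        ultimately show ?thesis by simp
      qed
      have e3: "(u i - H) / \<beta> \<le> 0" using Hi that b0 by (simp add: divide_nonpos_pos)
      show ?thesis
      proof (cases "real i < a")
        case True
        hence "2 powr ((u i - H) / \<beta>) \<le> 2 powr (real i - a)" using e1 by (intro powr_mono) auto
        thus ?thesis unfolding g_def using True ab by auto
      next
        case False
        show ?thesis
        proof (cases "b < real i")
          case True
          hence "2 powr ((u i - H) / \<beta>) \<le> 2 powr (b - real i)" using e2 by (intro powr_mono) auto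
          thus ?thesis unfolding g_def using True False ab by auto
        next
          case False2: False
          hence "2 powr ((u i - H) / \<beta>) \<le> 2 powr 0" using e3 by (intro powr_mono) auto
          thus ?thesis unfolding g_def using False2 False by auto
        qed
      qed
    qed
    hence "2 * 2 powr (H / \<beta>) * 2 powr ((u i - H) / \<beta>) \<le> 2 * 2 powr (H / \<beta>) * g i"
      by (intro mult_left_mono) auto
    finally show ?thesis .
  qed
  have gsum: "(\<Sum>i<n. g i) \<le> 2 * K / \<beta> + 5"
  proof -
    have "(\<Sum>i<n. g i) = (\<Sum>i<n. if real i < a then 2 powr (real i - a) else 0)
      + (\<Sum>i<n. if a \<le> real i \<and> real i \<le> b then 1 else 0)
      + (\<Sum>i<n. if b < real i then 2 powr (b - real i) else 0)"
      unfolding g_def by (simp add: sum.distrib)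
    also have "\<dots> \<le> 2 + (b + 1 - a) + 2"
    proof -
      have "(\<Sum>i<n. if real i < a then 2 powr (real i - a) else 0) \<le> 2"
        using left_tail[where n=n and a=a] by simp
      moreover have "(\<Sum>i<n. if b < real i then 2 powr (b - real i) else 0) \<le> 2"
      proof -
        have "2 powr (b - real n + 1) > 0" by simp
        hence "min 2 (2 powr (b - real n + 1)) > 0" by simp
        thus ?thesis using right_tail[where n=n and b=b] by linarith
      qed
      moreover have "(\<Sum>i<n. if a \<le> real i \<and> real i \<le> b then 1 else 0) \<le> b + 1 - a"
        using mid_count[where n=n and a=a and b=b] ab by simp
      ultimately show ?thesis by simp
    qed
    finally show ?thesis unfolding b_def by simp
  qed
  have "2 powr (T (x 0) (x n) / \<beta>) \<le> 2 * (\<Sum>i<n. 2 * 2 powr (H / \<beta>) * g i)"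
  proof -
    have "(\<Sum>i<n. 2 powr (T (x i) (x (Suc i)) / \<beta>)) \<le> (\<Sum>i<n. 2 * 2 powr (H / \<beta>) * g i)"
      by (rule sum_mono) (use step in auto)
    thus ?thesis using chain by linarith
  qed
  also have "\<dots> = 4 * 2 powr (H / \<beta>) * (\<Sum>i<n. g i)" by (simp add: sum_distrib_left[symmetric])
  also have "\<dots> \<le> 4 * 2 powr (H / \<beta>) * (2 * K / \<beta> + 5)" using gsum by (intro mult_left_mono) auto
  also have "4 * 2 powr (H / \<beta>) * (2 * K / \<beta> + 5) = 2 powr (H / \<beta>) * (8 * (K / \<beta>) + 20)"
    by (simp add: algebra_simps)
  finally have A: "2 powr (T (x 0) (x n) / \<beta>) \<le> 2 powr (H / \<beta>) * (8 * (K / \<beta>) + 20)" .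
  have "T (x 0) (x n) / \<beta> = H / \<beta> + K / \<beta>" unfolding K_def using b0 by (simp add: diff_divide_distrib)
  hence "2 powr (T (x 0) (x n) / \<beta>) = 2 powr (H / \<beta>) * 2 powr (K / \<beta>)"
    by (simp only: powr_add)
  with A have "2 powr (K / \<beta>) \<le> 8 * (K / \<beta>) + 20" by simp
  hence "K / \<beta> < 7" using exp_bound K0 b0 by simp
  hence "K < 7 * \<beta>" using b0 by (simp add: field_simps)
  thus False using Kbig unfolding K_def \<beta>_def by simp
qed



lemma busemann_tendsto:
  assumes MS: "Metric_space M d" and ray: "geodesic_ray M d \<rho>" and xM: "x \<in> M"
  shows "((\<lambda>t. t - d x (\<rho> t)) \<longlongrightarrow> height_fun d \<rho> x) at_top"
proof -
  interpret Metric_space M d by (rule MS)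
  define f where "f = (\<lambda>t. t - d x (\<rho> t))"
  have rM: "\<rho> t \<in> M" if "t \<ge> 0" for t using ray that unfolding geodesic_ray_def by auto
  have rd: "d (\<rho> s) (\<rho> t) = \<bar>s - t\<bar>" if "s \<ge> 0" "t \<ge> 0" for s t
    using ray that unfolding geodesic_ray_def by auto
  have mono: "f s \<le> f t" if "0 \<le> s" "s \<le> t" for s t
  proof -
    have "d x (\<rho> t) \<le> d x (\<rho> s) + d (\<rho> s) (\<rho> t)" using triangle xM rM that by auto
    thus ?thesis unfolding f_def using rd[of s t] that by simp
  qed
  have bd: "f t \<le> d x (\<rho> 0)" if "t \<ge> 0" for t
  proof -
    have "d (\<rho> 0) (\<rho> t) \<le> d (\<rho> 0) x + d x (\<rho> t)" using triangle xM rM that by auto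
    thus ?thesis unfolding f_def using rd[of 0 t] that commute[of x "\<rho> 0"] by simp
  qed
  define l where "l = (SUP t\<in>{0..}. f t)"
  have bdd: "bdd_above (f ` {0..})" using bd by (intro bdd_aboveI2[where M="d x (\<rho> 0)"]) auto
  have lim: "(f \<longlongrightarrow> l) at_top"
  proof (rule order_tendstoI)
    fix a assume "a < l"
    then obtain t0 where t0: "t0 \<in> {0..}" "a < f t0"
      unfolding l_def using less_cSUP_iff[of "{0..}" f a] bdd by auto
    show "eventually (\<lambda>t. a < f t) at_top"
      using eventually_ge_at_top[of t0] by eventually_elim (use t0 mono in force)
  next
    fix a assume "l < a"
    show "eventually (\<lambda>t. f t < a) at_top"
      using eventually_ge_at_top[of 0] proof eventually_elim
      case (elim t)
      have "f t \<le> l" unfolding l_def using cSUP_upper[of t "{0..}" f] bdd elim by auto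
      thus ?case using \<open>l < a\<close> by simp
    qed
  qed
  hence "height_fun d \<rho> x = l" unfolding height_fun_def f_def by (intro tendsto_Lim) auto
  thus ?thesis using lim unfolding f_def by simp
qed

lemma height_lip:
  assumes MS: "Metric_space M d" and ray: "geodesic_ray M d \<rho>" and xM: "x \<in> M" and yM: "y \<in> M"
  shows "\<bar>height_fun d \<rho> x - height_fun d \<rho> y\<bar> \<le> d x y"
proof -
  interpret Metric_space M d by (rule MS)
  have rM: "\<rho> t \<in> M" if "t \<ge> 0" for t using ray that unfolding geodesic_ray_def by auto
  have L: "((\<lambda>t. \<bar>(t - d x (\<rho> t)) - (t - d y (\<rho> t))\<bar>) \<longlongrightarrow> \<bar>height_fun d \<rho> x - height_fun d \<rho> y\<bar>) at_top"
    by (intro tendsto_rabs tendsto_diff busemann_tendsto[OF MS ray] xM yM)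
  show ?thesis
  proof (rule tendsto_le[OF trivial_limit_at_top_linorder tendsto_const L])
    show "eventually (\<lambda>t. \<bar>(t - d x (\<rho> t)) - (t - d y (\<rho> t))\<bar> \<le> d x y) at_top"
      using eventually_ge_at_top[of 0] proof eventually_elim
      case (elim t)
      have "d x (\<rho> t) \<le> d x y + d y (\<rho> t)" "d y (\<rho> t) \<le> d y x + d x (\<rho> t)"
        using triangle xM yM rM elim by auto
      thus ?case using commute[of x y] by simp
    qed
  qed
qed

definition Tfun :: "('a \<Rightarrow> 'a \<Rightarrow> real) \<Rightarrow> (real \<Rightarrow> 'a) \<Rightarrow> 'a \<Rightarrow> 'a \<Rightarrow> real" where
  "Tfun d \<rho> x y = (height_fun d \<rho> x + height_fun d \<rho> y + d x y) / 2"

lemma T_ultra: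
  assumes MS: "Metric_space M d" and ray: "geodesic_ray M d \<rho>" and hyp: "delta_hyperbolic M d \<delta>"
    and xM: "x \<in> M" and yM: "y \<in> M" and zM: "z \<in> M"
  shows "Tfun d \<rho> x z \<le> max (Tfun d \<rho> x y) (Tfun d \<rho> y z) + \<delta>"
proof -
  interpret Metric_space M d by (rule MS)
  have rM: "\<rho> t \<in> M" if "t \<ge> 0" for t using ray that unfolding geodesic_ray_def by auto
  define Tt where "Tt = (\<lambda>a b t. ((t - d a (\<rho> t)) + (t - d b (\<rho> t)) + d a b) / 2)"
  have lim: "((\<lambda>t. Tt a b t) \<longlongrightarrow> Tfun d \<rho> a b) at_top" if "a \<in> M" "b \<in> M" for a b
    unfolding Tt_def Tfun_def
    by (intro tendsto_divide tendsto_add tendsto_const busemann_tendsto[OF MS ray] that) auto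
  have L2: "((\<lambda>t. max (Tt x y t) (Tt y z t) + \<delta>) \<longlongrightarrow> max (Tfun d \<rho> x y) (Tfun d \<rho> y z) + \<delta>) at_top"
    by (intro tendsto_add tendsto_max lim tendsto_const xM yM zM)
  show ?thesis
  proof (rule tendsto_le[OF trivial_limit_at_top_linorder L2 lim[OF xM zM]])
    show "eventually (\<lambda>t. Tt x z t \<le> max (Tt x y t) (Tt y z t) + \<delta>) at_top"
      using eventually_ge_at_top[of 0] proof eventually_elim
      case (elim t)
      have "gromov_product d (\<rho> t) x z \<ge> min (gromov_product d (\<rho> t) x y) (gromov_product d (\<rho> t) y z) - \<delta>"
        using hyp rM[OF elim] xM yM zM unfolding delta_hyperbolic_def by blast
      hence "t - Tt x z t \<ge> min (t - Tt x y t) (t - Tt y z t) - \<delta>"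
        unfolding gromov_product_def Tt_def by (simp add: field_simps)
      thus ?case by (simp add: min_def max_def split: if_splits)
    qed
  qed
qed



lemma partition_mono:
  assumes "partition_of a b n t" "i \<le> j" "j \<le> n"
  shows "t i \<le> t j"
  using assms(2,3)
proof (induction j rule: dec_induct)
  case base then show ?case by simp
next
  case (step j)
  then show ?case using assms(1) unfolding partition_of_def by (meson Suc_le_lessD less_imp_le order_trans)
qed

lemma partition_range:
  assumes "partition_of a b n t" "i \<le> n"
  shows "a \<le> t i" "t i \<le> b"
  using partition_mono[OF assms(1), of 0 i] partition_mono[OF assms(1), of i n] assms
  unfolding partition_of_def by auto

lemma norm_le:
  assumes adm: "admissible_norm N" and "0 \<le> b" "b \<le> a"
  shows "N a b \<le> a"
proof -
  have "N a b \<le> N a a" using adm assms unfolding admissible_norm_def by auto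
  also have "N a a = N (a * 1) (a * 1)" by simp
  also have "\<dots> = \<bar>a\<bar> * N 1 1" using adm unfolding admissible_norm_def by blast
  also have "\<dots> = a" using adm assms unfolding admissible_norm_def by auto
  finally show ?thesis .
qed

lemma norm_ge:
  assumes adm: "admissible_norm N"
  shows "N a b \<ge> (\<bar>a\<bar> + \<bar>b\<bar>) / 2"
  using adm unfolding admissible_norm_def by blast

lemma tv_lower:
  assumes "partition_of a b n t"
  shows "ereal (\<Sum>i<n. \<bar>f (t (Suc i)) - f (t i)\<bar>) \<le> total_variation f a b"
  unfolding total_variation_def
  by (rule SUP_upper2[where i="(n, t)"]) (use assms in auto)

lemma tv_geodesic:
  assumes MS: "Metric_space M d" and ray: "geodesic_ray M d \<rho>" and g: "geodesic_seg M d g 0 L"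
  shows "total_variation (height_fun d \<rho> \<circ> g) 0 L \<le> ereal L"
  unfolding total_variation_def
proof (rule SUP_least)
  fix nt assume "nt \<in> {(n, t). partition_of 0 L n t}"
  then obtain n t where nt: "nt = (n, t)" and P: "partition_of 0 L n t" by auto
  have tr: "0 \<le> t i" "t i \<le> L" if "i \<le> n" for i using partition_range[OF P that] by auto
  have "(\<Sum>i<n. \<bar>(height_fun d \<rho> \<circ> g) (t (Suc i)) - (height_fun d \<rho> \<circ> g) (t i)\<bar>) \<le> (\<Sum>i<n. t (Suc i) - t i)"
  proof (rule sum_mono)
    fix i assume "i \<in> {..<n}"
    hence i: "i < n" by simp
    have inM: "g (t i) \<in> M" "g (t (Suc i)) \<in> M" using g tr[of i] tr[of "Suc i"] i unfolding geodesic_seg_def by auto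
    have "\<bar>height_fun d \<rho> (g (t (Suc i))) - height_fun d \<rho> (g (t i))\<bar> \<le> d (g (t (Suc i))) (g (t i))"
      by (rule height_lip[OF MS ray inM(2) inM(1)])
    also have "\<dots> = \<bar>t (Suc i) - t i\<bar>" using g tr[of i] tr[of "Suc i"] i unfolding geodesic_seg_def by auto
    also have "\<dots> = t (Suc i) - t i" using P i unfolding partition_of_def by auto
    finally show "\<bar>(height_fun d \<rho> \<circ> g) (t (Suc i)) - (height_fun d \<rho> \<circ> g) (t i)\<bar> \<le> t (Suc i) - t i" by simp
  qed
  also have "\<dots> = t n - t 0" by (rule sum_lessThan_telescope)
  also have "\<dots> = L" using P unfolding partition_of_def by simp
  finally show "ereal (\<Sum>i<fst nt. \<bar>(height_fun d \<rho> \<circ> g) (snd nt (Suc i)) - (height_fun d \<rho> \<circ> g) (snd nt i)\<bar>) \<le> ereal L"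
    using nt by simp
qed

lemma dprime_bounds:
  assumes MS: "Metric_space M d" and ray: "geodesic_ray M d \<rho>" and bus: "busemann_space M d"
    and adm: "admissible_norm N" and xM: "x \<in> M" and yM: "y \<in> M"
  shows "N (d x y) \<bar>height_fun d \<rho> x - height_fun d \<rho> y\<bar> \<le> d_prime M d (height_fun d \<rho>) N x y"
    and "d_prime M d (height_fun d \<rho>) N x y \<le> d x y"
proof -
  interpret Metric_space M d by (rule MS)
  define h where "h = height_fun d \<rho>"
  define Paths where "Paths = {c :: real \<Rightarrow> 'a. continuous_map (top_of_set {0..1}) (Metric_space.mtopology M d) c \<and> c 0 = x \<and> c 1 = y}"
  define I where "I = (INF c \<in> Paths. N_length d h N c)"
  have dp: "d_prime M d h N x y = real_of_ereal I" unfolding d_prime_def I_def Paths_def by simp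
  obtain g where g: "geodesic_from_to M d g x y"
    using bus xM yM unfolding busemann_space_def geodesic_mspace_def by blast
  define L where "L = d x y"
  have L0: "L \<ge> 0" unfolding L_def by simp
  have gs: "geodesic_seg M d g 0 L" and g0: "g 0 = x" and gL: "g L = y"
    using g unfolding geodesic_from_to_def L_def by auto
  have gM: "g s \<in> M" if "s \<in> {0..L}" for s using gs that unfolding geodesic_seg_def by auto
  have gd: "d (g s) (g s') = \<bar>s - s'\<bar>" if "s \<in> {0..L}" "s' \<in> {0..L}" for s s'
    using gs that unfolding geodesic_seg_def by auto
  define c where "c = (\<lambda>s. g (s * L))"
  have cM: "c s \<in> M" if "s \<in> {0..1}" for s
    unfolding c_def using that L0 by (intro gM) (auto simp: mult_le_cancel_right1 mult_left_le_one_le)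
  have cd: "d (c s) (c s') = L * \<bar>s - s'\<bar>" if "s \<in> {0..1}" "s' \<in> {0..1}" for s s'
  proof -
    have "s * L \<in> {0..L}" "s' * L \<in> {0..L}" using that L0 by (auto simp: mult_left_le_one_le)
    hence "d (c s) (c s') = \<bar>s * L - s' * L\<bar>" unfolding c_def by (rule gd)
    also have "\<dots> = L * \<bar>s - s'\<bar>" using L0 by (simp add: abs_mult left_diff_distrib[symmetric])
    finally show ?thesis .
  qed
  have cont: "continuous_map (top_of_set {0..1}) mtopology c"
    unfolding continuous_map_to_metric
  proof (intro ballI allI impI)
    fix s :: real and e :: real
    assume s: "s \<in> topspace (top_of_set {0..1})" and e: "e > 0"
    hence s01: "s \<in> {0..1}" by simp
    define r where "r = e / (L + 1)"
    have r0: "r > 0" unfolding r_def using e L0 by simp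
    show "\<exists>U. openin (top_of_set {0..1}) U \<and> s \<in> U \<and> (\<forall>y\<in>U. c y \<in> mball (c s) e)"
    proof (intro exI conjI)
      show "openin (top_of_set {0..1}) ({0..1} \<inter> ball s r)" by (rule openin_open_Int) simp
      show "s \<in> {0..1} \<inter> ball s r" using s01 r0 by simp
      show "\<forall>y\<in>{0..1} \<inter> ball s r. c y \<in> mball (c s) e"
      proof
        fix y assume y: "y \<in> {0..1} \<inter> ball s r"
        hence y01: "y \<in> {0..1}" and sy: "\<bar>s - y\<bar> < r" by (auto simp: dist_real_def)
        have "d (c s) (c y) = L * \<bar>s - y\<bar>" by (rule cd[OF s01 y01])
        also have "\<dots> \<le> L * r" using sy L0 by (intro mult_left_mono) auto
        also have "\<dots> < (L + 1) * r" using r0 by simp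
        also have "\<dots> = e" unfolding r_def using L0 by simp
        finally show "c y \<in> mball (c s) e" using cM s01 y01 by simp
      qed
    qed
  qed
  have cP: "c \<in> Paths" unfolding Paths_def using cont g0 gL unfolding c_def by simp
  have Nc: "N_length d h N c \<le> ereal L"
    unfolding N_length_def
  proof (rule SUP_least)
    fix nt assume "nt \<in> {(n, t). partition_of 0 1 n t}"
    then obtain n t where nt: "nt = (n, t)" and P: "partition_of 0 1 n t" by auto
    have tr: "t i \<in> {0..1}" if "i \<le> n" for i using partition_range[OF P that] by auto
    have "(\<Sum>i<n. N (d (c (t i)) (c (t (Suc i)))) \<bar>h (c (t i)) - h (c (t (Suc i)))\<bar>) \<le> (\<Sum>i<n. L * (t (Suc i) - t i))"
    proof (rule sum_mono)
      fix i assume "i \<in> {..<n}"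
      hence i: "i < n" by simp
      have ci: "c (t i) \<in> M" "c (t (Suc i)) \<in> M" using cM tr i by auto
      have "\<bar>h (c (t i)) - h (c (t (Suc i)))\<bar> \<le> d (c (t i)) (c (t (Suc i)))"
        unfolding h_def by (rule height_lip[OF MS ray ci])
      hence "N (d (c (t i)) (c (t (Suc i)))) \<bar>h (c (t i)) - h (c (t (Suc i)))\<bar> \<le> d (c (t i)) (c (t (Suc i)))"
        by (intro norm_le[OF adm]) auto
      also have "\<dots> = L * \<bar>t i - t (Suc i)\<bar>" using cd tr i by simp
      also have "\<dots> = L * (t (Suc i) - t i)" using P i unfolding partition_of_def by auto
      finally show "N (d (c (t i)) (c (t (Suc i)))) \<bar>h (c (t i)) - h (c (t (Suc i)))\<bar> \<le> L * (t (Suc i) - t i)" .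
    qed
    also have "\<dots> = L * (t n - t 0)" by (simp add: sum_distrib_left[symmetric] sum_lessThan_telescope)
    also have "\<dots> = L" using P unfolding partition_of_def by simp
    finally show "ereal (\<Sum>i<fst nt. N (d (c (snd nt i)) (c (snd nt (Suc i)))) \<bar>h (c (snd nt i)) - h (c (snd nt (Suc i)))\<bar>) \<le> ereal L"
      using nt by simp
  qed
  have Iup: "I \<le> ereal L" unfolding I_def using cP Nc by (intro INF_lower2) auto
  define lo where "lo = N (d x y) \<bar>h x - h y\<bar>"
  have Ilo: "ereal lo \<le> I"
    unfolding I_def
  proof (rule INF_greatest)
    fix c' assume "c' \<in> Paths"
    hence c'0: "c' 0 = x" and c'1: "c' 1 = y" unfolding Paths_def by auto
    define t1 where "t1 = (\<lambda>i::nat. if i = 0 then (0::real) else 1)"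
    have P1: "partition_of 0 1 1 t1" unfolding partition_of_def t1_def by simp
    show "ereal lo \<le> N_length d h N c'"
      unfolding N_length_def
      by (rule SUP_upper2[where i="(1, t1)"]) (use P1 c'0 c'1 in \<open>auto simp: lo_def t1_def\<close>)
  qed
  have "lo \<le> real_of_ereal I \<and> real_of_ereal I \<le> L"
    using Ilo Iup by (cases I) auto
  thus "N (d x y) \<bar>height_fun d \<rho> x - height_fun d \<rho> y\<bar> \<le> d_prime M d (height_fun d \<rho>) N x y"
    and "d_prime M d (height_fun d \<rho>) N x y \<le> d x y"
    using dp unfolding lo_def L_def h_def by auto
qed



lemma var_ge:
  fixes u :: "nat \<Rightarrow> real"
  shows "m \<le> n \<Longrightarrow> \<bar>u m - u 0\<bar> + \<bar>u n - u m\<bar> \<le> (\<Sum>i<n. \<bar>u (Suc i) - u i\<bar>)"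
proof (induction n arbitrary: m)
  case 0
  then show ?case by simp
next
  case (Suc n)
  show ?case
  proof (cases "m \<le> n")
    case True
    have "\<bar>u m - u 0\<bar> + \<bar>u n - u m\<bar> \<le> (\<Sum>i<n. \<bar>u (Suc i) - u i\<bar>)" by (rule Suc.IH[OF True])
    then show ?thesis by simp
  next
    case False
    hence m: "m = Suc n" using Suc.prems by simp
    have "\<bar>u n - u 0\<bar> + \<bar>u n - u n\<bar> \<le> (\<Sum>i<n. \<bar>u (Suc i) - u i\<bar>)" by (rule Suc.IH) simp
    then show ?thesis using m by simp
  qed
qed

theorem mainTheorem10:
  fixes \<delta> :: real
  assumes "\<delta> \<ge> 0"
  shows "\<exists>C::real. \<forall>(M::'a set) d \<rho> N.
     Metric_space M d \<and> proper_mspace M d \<and> geodesically_complete M d \<and>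
     delta_hyperbolic M d \<delta> \<and> busemann_space M d \<and>
     geodesic_ray M d \<rho> \<and> vertically_convergent M d \<rho> \<and> admissible_norm N \<longrightarrow>
     (\<forall>p\<in>M. \<forall>q\<in>M. \<forall>\<gamma>' \<gamma>.
        geodesic_from_to M (d_prime M d (height_fun d \<rho>) N) \<gamma>' p q \<and>
        geodesic_from_to M d \<gamma> p q \<longrightarrow>
        total_variation (height_fun d \<rho> \<circ> \<gamma>') 0 (d_prime M d (height_fun d \<rho>) N p q)
          \<ge> total_variation (height_fun d \<rho> \<circ> \<gamma>) 0 (d p q) - ereal C)"
proof (intro exI[of _ "28 * (\<delta> + 1)"] allI impI ballI, elim conjE)
  fix M :: "'a set" and d \<rho> N p q \<gamma>' \<gamma>
  assume MS: "Metric_space M d" and hyp: "delta_hyperbolic M d \<delta>" and bus: "busemann_space M d"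
    and ray: "geodesic_ray M d \<rho>" and adm: "admissible_norm N"
    and pM: "p \<in> M" and qM: "q \<in> M"
    and g': "geodesic_from_to M (d_prime M d (height_fun d \<rho>) N) \<gamma>' p q"
    and g: "geodesic_from_to M d \<gamma> p q"
  interpret Metric_space M d by (rule MS)
  define C where "C = 28 * (\<delta> + 1)"
  have C0: "C \<ge> 0" unfolding C_def using assms by simp
  define h where "h = height_fun d \<rho>"
  define d' where "d' = d_prime M d h N"
  define D where "D = d' p q"
  define L where "L = d p q"
  have L0: "L \<ge> 0" unfolding L_def by simp
  have g's: "geodesic_seg M d' \<gamma>' 0 D" and g'0: "\<gamma>' 0 = p" and g'D: "\<gamma>' D = q"
    using g' unfolding geodesic_from_to_def d'_def D_def h_def by auto
  have D0: "D \<ge> 0" using g's unfolding geodesic_seg_def by simp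
  have gs: "geodesic_seg M d \<gamma> 0 L" using g unfolding geodesic_from_to_def L_def by auto
  have Vg: "total_variation (h \<circ> \<gamma>) 0 L \<le> ereal L" unfolding h_def by (rule tv_geodesic[OF MS ray gs])
  have DL: "D \<le> L" unfolding D_def L_def d'_def h_def by (rule dprime_bounds(2)[OF MS ray bus adm pM qM])
  have inM: "\<gamma>' s \<in> M" if "s \<in> {0..D}" for s using g's that unfolding geodesic_seg_def by auto
  have pair: "d (\<gamma>' s) (\<gamma>' s') + \<bar>h (\<gamma>' s) - h (\<gamma>' s')\<bar> \<le> 2 * \<bar>s - s'\<bar>"
    and pair2: "\<bar>h (\<gamma>' s) - h (\<gamma>' s')\<bar> \<le> \<bar>s - s'\<bar>"
    if "s \<in> {0..D}" "s' \<in> {0..D}" for s s'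
  proof -
    have "N (d (\<gamma>' s) (\<gamma>' s')) \<bar>h (\<gamma>' s) - h (\<gamma>' s')\<bar> \<le> d' (\<gamma>' s) (\<gamma>' s')"
      unfolding d'_def h_def by (rule dprime_bounds(1)[OF MS ray bus adm inM[OF that(1)] inM[OF that(2)]])
    also have "\<dots> = \<bar>s - s'\<bar>" using g's that unfolding geodesic_seg_def by auto
    finally have "N (d (\<gamma>' s) (\<gamma>' s')) \<bar>h (\<gamma>' s) - h (\<gamma>' s')\<bar> \<le> \<bar>s - s'\<bar>" .
    moreover have "N (d (\<gamma>' s) (\<gamma>' s')) \<bar>h (\<gamma>' s) - h (\<gamma>' s')\<bar> \<ge> (\<bar>d (\<gamma>' s) (\<gamma>' s')\<bar> + \<bar>\<bar>h (\<gamma>' s) - h (\<gamma>' s')\<bar>\<bar>) / 2"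
      by (rule norm_ge[OF adm])
    ultimately show A: "d (\<gamma>' s) (\<gamma>' s') + \<bar>h (\<gamma>' s) - h (\<gamma>' s')\<bar> \<le> 2 * \<bar>s - s'\<bar>" by simp
    have "\<bar>h (\<gamma>' s) - h (\<gamma>' s')\<bar> \<le> d (\<gamma>' s) (\<gamma>' s')"
      unfolding h_def by (rule height_lip[OF MS ray inM[OF that(1)] inM[OF that(2)]])
    with A show "\<bar>h (\<gamma>' s) - h (\<gamma>' s')\<bar> \<le> \<bar>s - s'\<bar>" by simp
  qed
  have main: "ereal (L - C) \<le> total_variation (h \<circ> \<gamma>') 0 D"
  proof (cases "D = 0")
    case True
    have "L + \<bar>h (\<gamma>' 0) - h (\<gamma>' D)\<bar> \<le> 2 * \<bar>0 - D\<bar>"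
      using pair[of 0 D] D0 g'0 g'D unfolding L_def by simp
    hence L00: "L = 0" using True L0 by simp
    have P0: "partition_of 0 D 0 (\<lambda>i. 0)" unfolding partition_of_def using True by simp
    have "ereal 0 \<le> total_variation (h \<circ> \<gamma>') 0 D" using tv_lower[OF P0, of "h \<circ> \<gamma>'"] by simp
    moreover have "ereal (L - C) \<le> ereal 0" using L00 C0 by simp
    ultimately show ?thesis by (rule order_trans[rotated])
  next
    case False
    hence Dpos: "D > 0" using D0 by simp
    define \<delta>1 where "\<delta>1 = \<delta> + 1"
    have d1: "\<delta>1 > 0" unfolding \<delta>1_def using assms by simp
    define \<beta> where "\<beta> = 2 * \<delta>1"
    have b0: "\<beta> > 0" unfolding \<beta>_def using d1 by simp
    define n where "n = nat \<lceil>D / \<beta>\<rceil>"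
    have cpos: "\<lceil>D / \<beta>\<rceil> > 0" using Dpos b0 by simp
    have rn: "real n = real_of_int \<lceil>D / \<beta>\<rceil>" unfolding n_def using cpos by simp
    have n1: "1 \<le> n" unfolding n_def using cpos by linarith
    have nb1: "(real n - 1) * \<beta> < D" and nb2: "D \<le> real n * \<beta>"
    proof -
      have "real n - 1 < D / \<beta>" "D / \<beta> \<le> real n" using ceiling_correct[of "D / \<beta>"] rn by auto
      thus "(real n - 1) * \<beta> < D" "D \<le> real n * \<beta>" using b0 by (auto simp: field_simps)
    qed
    define t where "t = (\<lambda>i. if i < n then real i * \<beta> else D)"
    have tlt: "t i = real i * \<beta>" if "i < n" for i unfolding t_def using that by simp
    have tn: "t n = D" unfolding t_def by simp
    have tD: "t i \<in> {0..D}" if "i \<le> n" for i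
    proof (cases "i < n")
      case True
      have "real i \<le> real n - 1" using True by linarith
      hence A: "real i * \<beta> \<le> (real n - 1) * \<beta>" using b0 by (intro mult_right_mono) auto
      have B: "real i * \<beta> \<ge> 0" using b0 by simp
      show ?thesis using tlt[OF True] nb1 A B by simp
    next
      case False
      thus ?thesis using that tn D0 by simp
    qed
    have tstep: "t i < t (Suc i) \<and> t (Suc i) - t i \<le> \<beta>" if "i < n" for i
    proof (cases "Suc i < n")
      case True
      thus ?thesis using tlt[OF that] tlt[OF True] b0 by (simp add: distrib_right)
    next
      case False
      hence "Suc i = n" using that by simp
      hence e: "real n * \<beta> = real i * \<beta> + \<beta>" by (auto simp: distrib_right)
      have "t (Suc i) = D" using \<open>Suc i = n\<close> tn by simp
      thus ?thesis using tlt[OF that] e nb1 nb2 by (simp add: left_diff_distrib)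
    qed
    have P: "partition_of 0 D n t" unfolding partition_of_def using tlt[of 0] n1 tn tstep by auto
    define x where "x = (\<lambda>i. \<gamma>' (t i))"
    define u where "u = (\<lambda>i. h (x i))"
    have xM: "x i \<in> M" if "i \<le> n" for i unfolding x_def by (rule inM[OF tD[OF that]])
    have x0: "x 0 = p" unfolding x_def using tlt[of 0] n1 g'0 by simp
    have xn: "x n = q" unfolding x_def using tn g'D by simp
    have ulip: "\<bar>u i - u j\<bar> \<le> \<bar>t i - t j\<bar>" if "i \<le> n" "j \<le> n" for i j
      unfolding u_def x_def by (rule pair2[OF tD[OF that(1)] tD[OF that(2)]])
    define T where "T = Tfun d \<rho>"
    have Teq: "T a b = (h a + h b + d a b) / 2" for a b unfolding T_def Tfun_def h_def by simp
    define H where "H = Max (u ` {..n})"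
    have Hge: "u i \<le> H" if "i \<le> n" for i unfolding H_def using that by (intro Max_ge) auto
    have "H \<in> u ` {..n}" unfolding H_def by (rule Max_in) auto
    then obtain m where m: "m \<le> n" "u m = H" by auto
    have key: "T (x 0) (x n) - H < 14 * \<delta>1"
    proof (rule key_discrete[where S = M and D = D])
      show "0 < \<delta>1" by (rule d1)
      show "T a c \<le> max (T a b) (T b c) + \<delta>1" if "a \<in> M" "b \<in> M" "c \<in> M" for a b c
        using T_ultra[OF MS ray hyp that] unfolding T_def \<delta>1_def by simp
      show "\<forall>i\<le>n. x i \<in> M" using xM by simp
      show "1 \<le> n" by (rule n1)
      show "\<forall>i<n. T (x i) (x (Suc i)) \<le> u i + 2 * \<delta>1"
      proof (intro allI impI)
        fix i assume i: "i < n"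
        have "d (x i) (x (Suc i)) + \<bar>u i - u (Suc i)\<bar> \<le> 2 * \<bar>t i - t (Suc i)\<bar>"
          unfolding x_def u_def using pair tD i by simp
        also have "\<bar>t i - t (Suc i)\<bar> \<le> \<beta>" using tstep[OF i] by simp
        finally have "d (x i) (x (Suc i)) + \<bar>u i - u (Suc i)\<bar> \<le> 2 * \<beta>" by simp
        moreover have "u (Suc i) - u i \<le> \<bar>u i - u (Suc i)\<bar>" by arith
        moreover have "2 * T (x i) (x (Suc i)) = u i + u (Suc i) + d (x i) (x (Suc i))" unfolding Teq u_def by simp
        ultimately show "T (x i) (x (Suc i)) \<le> u i + 2 * \<delta>1" unfolding \<beta>_def by linarith
      qed
      show "\<forall>i<n. u i - u 0 \<le> real i * (2 * \<delta>1)"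
      proof (intro allI impI)
        fix i assume i: "i < n"
        have "\<bar>u i - u 0\<bar> \<le> \<bar>t i - t 0\<bar>" using ulip i by simp
        thus "u i - u 0 \<le> real i * (2 * \<delta>1)" using tlt[OF i] tlt[of 0] n1 b0 unfolding \<beta>_def by simp
      qed
      show "\<forall>i<n. u i - u n \<le> D - real i * (2 * \<delta>1)"
      proof (intro allI impI)
        fix i assume i: "i < n"
        have "\<bar>u i - u n\<bar> \<le> \<bar>t i - t n\<bar>" using ulip i by simp
        moreover have "t i \<le> D" using tD i by simp
        ultimately show "u i - u n \<le> D - real i * (2 * \<delta>1)" using tlt[OF i] tn unfolding \<beta>_def by simp
      qed
      have "2 * T (x 0) (x n) = u 0 + u n + L" unfolding Teq u_def L_def using x0 xn by simp
      thus "D \<le> 2 * T (x 0) (x n) - u 0 - u n" using DL by linarith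
      show "\<forall>i<n. u i \<le> H" using Hge by simp
      show "u 0 \<le> H" using Hge by simp
    qed
    have "ereal (\<Sum>i<n. \<bar>(h \<circ> \<gamma>') (t (Suc i)) - (h \<circ> \<gamma>') (t i)\<bar>) \<le> total_variation (h \<circ> \<gamma>') 0 D"
      by (rule tv_lower[OF P])
    moreover have "(\<Sum>i<n. \<bar>(h \<circ> \<gamma>') (t (Suc i)) - (h \<circ> \<gamma>') (t i)\<bar>) = (\<Sum>i<n. \<bar>u (Suc i) - u i\<bar>)"
      unfolding u_def x_def by simp
    moreover have "\<bar>u m - u 0\<bar> + \<bar>u n - u m\<bar> \<le> (\<Sum>i<n. \<bar>u (Suc i) - u i\<bar>)" by (rule var_ge[OF m(1)])
    moreover have "L - C \<le> \<bar>u m - u 0\<bar> + \<bar>u n - u m\<bar>"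
    proof -
      have "2 * T (x 0) (x n) = u 0 + u n + L" unfolding Teq u_def L_def using x0 xn by simp
      moreover have "u m - u 0 \<le> \<bar>u m - u 0\<bar>" "u m - u n \<le> \<bar>u n - u m\<bar>" by arith+
      ultimately show ?thesis using key m(2) unfolding C_def \<delta>1_def by linarith
    qed
    ultimately have "ereal (L - C) \<le> ereal (\<Sum>i<n. \<bar>(h \<circ> \<gamma>') (t (Suc i)) - (h \<circ> \<gamma>') (t i)\<bar>)"
      by simp
    thus ?thesis using \<open>ereal (\<Sum>i<n. \<bar>(h \<circ> \<gamma>') (t (Suc i)) - (h \<circ> \<gamma>') (t i)\<bar>) \<le> total_variation (h \<circ> \<gamma>') 0 D\<close>
      by (rule order_trans)
  qed
  have "total_variation (h \<circ> \<gamma>) 0 L - ereal C \<le> ereal (L - C)"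
    using Vg by (cases "total_variation (h \<circ> \<gamma>) 0 L") auto
  hence fin: "total_variation (h \<circ> \<gamma>) 0 L - ereal C \<le> total_variation (h \<circ> \<gamma>') 0 D"
    using main by (rule order_trans)
  show "total_variation (height_fun d \<rho> \<circ> \<gamma>) 0 (d p q) - ereal (28 * (\<delta> + 1))
      \<le> total_variation (height_fun d \<rho> \<circ> \<gamma>') 0 (d_prime M d (height_fun d \<rho>) N p q)"
    using fin unfolding C_def h_def L_def D_def d'_def .
qed

end
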